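(* Let $X\in C^\infty(\mathbb T;\mathbb R)$ have at least one zero and no degenerate zero, and let $K^\pm$ be as below. For every sufficiently small $\sigma>0$ there exists a smooth function $\eta_\sigma:\mathbb T\to\mathbb R$ with $\eta_\sigma\equiv1$ on $K^+$, $\eta_\sigma\equiv0$ on $K^-$, and $$\Big|\frac{d}{dt}\Big|_{t=0}\eta_\sigma(X^t(x,\xi))\Big|=|X(x)\eta_\sigma'(x)|<\sigma\qquad\forall (x,\xi)\in\mathbb T\times\mathbb R,$$ where $X^t(x,\xi)$ is the $x$-component of the flow of $\mathcal X_h(x,\xi)=(X(x),-\xi X'(x))$.
   Context: $\mathbb T:=\mathbb R/2\pi\mathbb Z$; $K^+:=\{x:X(x)=0,X'(x)<0\}$, $K^-:=\{x:X(x)=0,X'(x)>0\}$. *)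

theory Defs
  imports "HOL-Analysis.Analysis"
begin

text \<open>Functions on the torus T = R/2piZ are represented as 2pi-periodic functions on R.\<close>
definition periodic_2pi :: "(real \<Rightarrow> real) \<Rightarrow> bool" where
  "periodic_2pi f \<longleftrightarrow> (\<forall>x. f (x + 2 * pi) = f x)"

definition smooth_real :: "(real \<Rightarrow> real) \<Rightarrow> bool" where
  "smooth_real f \<longleftrightarrow> (\<forall>n x. ((deriv ^^ n) f) differentiable (at x))"

definition Kplus :: "(real \<Rightarrow> real) \<Rightarrow> real set" where
  "Kplus X = {x. X x = 0 \<and> deriv X x < 0}"

definition Kminus :: "(real \<Rightarrow> real) \<Rightarrow> real set" where
  "Kminus X = {x. X x = 0 \<and> deriv X x > 0}"

end

theory Submission
  imports Defs
begin


fun Cn :: "nat \<Rightarrow> (real \<Rightarrow> real) \<Rightarrow> bool" where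
  "Cn 0 f = (\<forall>x. f differentiable at x)"
| "Cn (Suc n) f = ((\<forall>x. f differentiable at x) \<and> Cn n (deriv f))"

fun CnOn :: "nat \<Rightarrow> real set \<Rightarrow> (real \<Rightarrow> real) \<Rightarrow> bool" where
  "CnOn 0 U f = (\<forall>x\<in>U. f differentiable at x)"
| "CnOn (Suc n) U f = ((\<forall>x\<in>U. f differentiable at x) \<and> CnOn n U (deriv f))"

lemma Cn_iff: "Cn n f \<longleftrightarrow> (\<forall>k\<le>n. \<forall>x. (deriv ^^ k) f differentiable at x)"
proof (induction n arbitrary: f)
  case 0 then show ?case by simp
next
  case (Suc n)
  have "(\<forall>k\<le>Suc n. \<forall>x. (deriv ^^ k) f differentiable at x) \<longleftrightarrow>
     (\<forall>x. f differentiable at x) \<and> (\<forall>k\<le>n. \<forall>x. (deriv ^^ k) (deriv f) differentiable at x)"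
  proof (intro iffI conjI allI impI)
    fix k x assume H: "\<forall>k\<le>Suc n. \<forall>x. (deriv ^^ k) f differentiable at x" "k \<le> n"
    then show "(deriv ^^ k) (deriv f) differentiable at x"
      using H(1)[rule_format, of "Suc k"] by (simp add: funpow_Suc_right del: funpow.simps)
  next
    fix x assume H: "\<forall>k\<le>Suc n. \<forall>x. (deriv ^^ k) f differentiable at x"
    then show "f differentiable at x" using H[rule_format, of 0] by simp
  next
    fix k x assume H: "(\<forall>x. f differentiable at x) \<and> (\<forall>k\<le>n. \<forall>x. (deriv ^^ k) (deriv f) differentiable at x)"
      "k \<le> Suc n"
    show "(deriv ^^ k) f differentiable at x"
    proof (cases k)
      case 0 then show ?thesis using H by simp
    next
      case (Suc j) then show ?thesis using H by (simp add: funpow_Suc_right del: funpow.simps)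
    qed
  qed
  then show ?case using Suc.IH by simp
qed

lemma smooth_Cn: "smooth_real f \<longleftrightarrow> (\<forall>n. Cn n f)"
  unfolding smooth_real_def Cn_iff by blast

lemma Cn_diff: "Cn n f \<Longrightarrow> f differentiable at x"
  by (cases n) auto

lemma Cn_hasd: "Cn n f \<Longrightarrow> (f has_real_derivative deriv f x) (at x)"
  using Cn_diff DERIV_deriv_iff_real_differentiable by blast

lemma Cn_Suc_mono: "Cn (Suc n) f \<Longrightarrow> Cn n f"
  by (induction n arbitrary: f) auto

lemma CnOn_Suc_mono: "CnOn (Suc n) U f \<Longrightarrow> CnOn n U f"
  by (induction n arbitrary: f) auto

lemma CnOn_diff: "CnOn n U f \<Longrightarrow> x \<in> U \<Longrightarrow> f differentiable at x"
  by (cases n) auto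

lemma Cn_const: "Cn n (\<lambda>x. c)"
  by (induction n arbitrary: c) (auto simp: deriv_const)

lemma Cn_add: "Cn n f \<Longrightarrow> Cn n g \<Longrightarrow> Cn n (\<lambda>x. f x + g x)"
proof (induction n arbitrary: f g)
  case 0 then show ?case by auto
next
  case (Suc n)
  have "deriv (\<lambda>x. f x + g x) = (\<lambda>x. deriv f x + deriv g x)"
  proof
    fix x show "deriv (\<lambda>x. f x + g x) x = deriv f x + deriv g x"
      by (rule DERIV_imp_deriv, intro derivative_intros Cn_hasd[OF Suc.prems(1)] Cn_hasd[OF Suc.prems(2)])
  qed
  then show ?case using Suc by auto
qed

lemma Cn_mult: "Cn n f \<Longrightarrow> Cn n g \<Longrightarrow> Cn n (\<lambda>x. f x * g x)"
proof (induction n arbitrary: f g)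
  case 0 then show ?case by auto
next
  case (Suc n)
  have "deriv (\<lambda>x. f x * g x) = (\<lambda>x. deriv f x * g x + f x * deriv g x)"
  proof
    fix x show "deriv (\<lambda>x. f x * g x) x = deriv f x * g x + f x * deriv g x"
      by (rule DERIV_imp_deriv, rule derivative_eq_intros, rule Cn_hasd[OF Suc.prems(1)], rule Cn_hasd[OF Suc.prems(2)]) simp
  qed
  moreover have "Cn n (\<lambda>x. deriv f x * g x + f x * deriv g x)"
    using Suc.prems Cn_Suc_mono by (intro Cn_add Suc.IH) auto
  ultimately show ?case using Suc by auto
qed

lemma Cn_comp:
  assumes "CnOn n U h" "Cn n f" "\<And>x. f x \<in> U"
  shows "Cn n (\<lambda>x. h (f x))"
  using assms
proof (induction n arbitrary: h f)
  case 0
  have "(\<lambda>x. h (f x)) differentiable at x" for x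
    using differentiable_chain_at[of f x h] 0 by (simp add: o_def)
  then show ?case by simp
next
  case (Suc n)
  have hd: "(h has_real_derivative deriv h (f x)) (at (f x))" for x
    using CnOn_diff[OF Suc.prems(1) Suc.prems(3)] DERIV_deriv_iff_real_differentiable by blast
  have "deriv (\<lambda>x. h (f x)) = (\<lambda>x. deriv h (f x) * deriv f x)"
  proof
    fix x show "deriv (\<lambda>x. h (f x)) x = deriv h (f x) * deriv f x"
      using DERIV_imp_deriv[OF DERIV_chain'[OF Cn_hasd[OF Suc.prems(2)] hd]] by (simp add: mult.commute)
  qed
  moreover have "Cn n (\<lambda>x. deriv h (f x) * deriv f x)"
  proof (rule Cn_mult)
    show "Cn n (\<lambda>x. deriv h (f x))"
      using Suc.IH[of "deriv h" f] Suc.prems Cn_Suc_mono by simp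
    show "Cn n (deriv f)" using Suc.prems(2) by simp
  qed
  moreover have "\<forall>x. (\<lambda>x. h (f x)) differentiable at x"
    using DERIV_chain'[OF Cn_hasd[OF Suc.prems(2)] hd] real_differentiable_def by blast
  ultimately show ?case by auto
qed

lemma CnOn_cong:
  assumes "open U" "\<And>x. x \<in> U \<Longrightarrow> g x = h x" "CnOn n U h"
  shows "CnOn n U g"
  using assms
proof (induction n arbitrary: g h)
  case 0
  have "g differentiable at x" if "x \<in> U" for x
    using has_field_derivative_transform_within_open[of h "deriv h x" x U g] 0 that
      DERIV_deriv_iff_real_differentiable real_differentiable_def by (metis CnOn.simps(1))
  then show ?case by simp
next
  case (Suc n)
  have hd: "(g has_real_derivative deriv h x) (at x)" if "x \<in> U" for x
    using CnOn_diff[OF Suc.prems(3) that] DERIV_deriv_iff_real_differentiable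
      has_field_derivative_transform_within_open[OF _ Suc.prems(1) that, of h _ g] Suc.prems(2)
    by metis
  have "CnOn n U (deriv g)"
    using Suc.IH[OF Suc.prems(1) _, of "deriv g" "deriv h"] Suc.prems(3) hd DERIV_imp_deriv by auto
  then show ?case using hd real_differentiable_def by auto
qed

lemma CnOn_powr: "CnOn n {0<..} (\<lambda>u. c * u powr a)"
proof (induction n arbitrary: c a)
  case 0
  have "((\<lambda>u. c * u powr a) has_real_derivative c * (a * u powr (a - 1))) (at u)" if "u > 0" for u
    using that by (auto intro!: derivative_eq_intros)
  then show ?case using real_differentiable_def by auto
next
  case (Suc n)
  have hd: "((\<lambda>u. c * u powr a) has_real_derivative (c * a) * u powr (a - 1)) (at u)" if "u > 0" for u
    using that by (auto intro!: derivative_eq_intros)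
  have "CnOn n {0<..} (deriv (\<lambda>u. c * u powr a))"
    by (rule CnOn_cong[OF _ _ Suc.IH[of "c*a" "a - 1"]]) (auto intro: DERIV_imp_deriv hd)
  then show ?case using hd real_differentiable_def by auto
qed

lemma CnOn_ln: "CnOn n {0<..} ln"
proof -
  have hd: "(ln has_real_derivative 1 * u powr (-1)) (at u)" if "u > 0" for u
    using that by (auto intro!: derivative_eq_intros simp: powr_neg_one)
  have "CnOn (Suc n) {0<..} ln"
    using CnOn_cong[OF _ _ CnOn_powr[of n 1 "-1"], of "deriv ln"] hd DERIV_imp_deriv real_differentiable_def
    by auto
  then show ?thesis by (rule CnOn_Suc_mono)
qed

lemma Cn_powr: "Cn n f \<Longrightarrow> (\<And>x. f x > 0) \<Longrightarrow> Cn n (\<lambda>x. f x powr a)"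
  using Cn_comp[OF CnOn_powr[of n 1 a], of f] by auto

lemma Cn_ln: "Cn n f \<Longrightarrow> (\<And>x. f x > 0) \<Longrightarrow> Cn n (\<lambda>x. ln (f x))"
  using Cn_comp[OF CnOn_ln[of n], of f] by auto

lemma Cn_deriv: "Cn (Suc n) f \<Longrightarrow> Cn n (deriv f)" by simp



lemma key_bound:
  fixes a a' b m A C B K \<sigma> p D \<epsilon> T :: real
  assumes m: "m > 0" and N: "a*a + b*b \<ge> m"
    and aA: "\<bar>a\<bar> \<le> A" and A: "A > 0" and Cb: "\<bar>a'*b - a*a\<bar> \<le> C"
    and bB: "\<bar>b\<bar> \<le> B" and sig: "\<sigma> > 0"
    and K: "K = C * m powr (-3/2) + 1"
    and p: "p = \<sigma> / (4*A)"
    and eps: "\<epsilon> = sqrt (\<sigma> / (4*K))"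
    and T: "T = 4*K*(B*B)/\<sigma> + 1"
    and D: "D = exp (T powr (1/p)) / (\<epsilon>*\<epsilon>)"
  defines "NN \<equiv> a*a + b*b"
  defines "S \<equiv> NN powr (-1/2)"
  defines "S' \<equiv> (-1/2) * NN powr (-1/2 - 1) * (a*a' + a'*a + (b*a + a*b))"
  defines "Q \<equiv> 1 + ln (1 + D * (b*b))"
  defines "Q' \<equiv> D * (a*b + b*a) / (1 + D*(b*b))"
  defines "M \<equiv> Q powr (-p)"
  defines "M' \<equiv> (-p) * Q powr (-p - 1) * Q'"
  shows "\<bar>b * (-1/2 * (a'*S*M + a*S'*M + a*S*M'))\<bar> < \<sigma>"
proof -
  have NNpos: "NN > 0" using N m NN_def by linarith
  have C0: "C \<ge> 0" using Cb by linarith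
  have Kpos: "K > 0" using K C0 by (simp add: add_nonneg_pos)
  define P where "P = NN powr (-3/2)"
  have Ppos: "P > 0" using NNpos P_def by simp
  have SNP: "S = NN * P"
  proof -
    have "NN powr (-1/2) = NN powr (1 + (-3/2))" by simp
    also have "\<dots> = NN powr 1 * NN powr (-3/2)" by (rule powr_add)
    also have "\<dots> = NN * NN powr (-3/2)" using NNpos by simp
    finally show ?thesis unfolding S_def P_def .
  qed
  have S'P: "S' = - P * (a*a' + b*a)"
    unfolding S'_def P_def by (simp add: algebra_simps)
  have id1: "a'*S + a*S' = b*(a'*b - a*a) * P"
    unfolding SNP S'P NN_def by (simp add: algebra_simps)
  have Dpos: "D > 0" using D eps sig Kpos by simp
  have Q1: "Q \<ge> 1" unfolding Q_def using Dpos by (simp add: mult_nonneg_nonneg)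
  have ppos: "p > 0" using p sig A by simp
  have Qp1: "Q powr p \<ge> 1" using Q1 ppos by (simp add: ge_one_powr_ge_zero)
  have Mdef: "M = 1 / Q powr p" unfolding M_def by (simp add: powr_minus_divide)
  have M1: "M \<le> 1" "M \<ge> 0" unfolding Mdef using Qp1 by (auto simp: divide_le_eq_1)
  have Pm: "P \<le> m powr (-3/2)" unfolding P_def using N m NN_def by (intro powr_mono2') auto
  have CP: "C * P \<le> K" unfolding K using C0 Pm by (smt (verit) mult_left_mono)
  define T1 where "T1 = b*(a'*S + a*S')*M"
  have T1e: "T1 = (b*b)*(a'*b - a*a)*P*M" unfolding T1_def id1 by (simp add: algebra_simps)
  have "\<bar>T1\<bar> = (b*b)*\<bar>a'*b - a*a\<bar>*P*M" unfolding T1e using Ppos M1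
    by (simp add: abs_mult)
  also have "\<dots> \<le> (b*b)*C*P*M" using Cb Ppos M1
    by (intro mult_right_mono mult_left_mono) auto
  also have "\<dots> = (C*P) * ((b*b)*M)" by (simp add: algebra_simps)
  also have "\<dots> \<le> K * ((b*b)*M)" using CP M1 by (intro mult_right_mono) auto
  finally have T1b: "\<bar>T1\<bar> \<le> K * ((b*b)*M)" .
  have epos: "\<epsilon> > 0" using eps sig Kpos by simp
  have ee: "\<epsilon> * \<epsilon> = \<sigma> / (4*K)" unfolding eps using sig Kpos by simp
  have Tpos: "T > 0" unfolding T using Kpos sig by (simp add: add_nonneg_pos)
  have T1s: "\<bar>T1\<bar> \<le> \<sigma>/4"
  proof (cases "\<bar>b\<bar> \<le> \<epsilon>")
    case True
    have "\<bar>b\<bar>*\<bar>b\<bar> \<le> \<epsilon>*\<epsilon>" using True epos by (intro mult_mono) auto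
    then have bb: "b*b \<le> \<epsilon>*\<epsilon>" by simp
    have "(b*b)*M \<le> (b*b)*1" using M1 by (intro mult_left_mono) auto
    then have "(b*b)*M \<le> \<epsilon>*\<epsilon>" using bb by linarith
    then have "K*((b*b)*M) \<le> K*(\<epsilon>*\<epsilon>)" using Kpos by (intro mult_left_mono) auto
    also have "\<dots> = \<sigma>/4" unfolding ee using Kpos by simp
    finally show ?thesis using T1b by linarith
  next
    case False
    have "\<epsilon>*\<epsilon> \<le> \<bar>b\<bar>*\<bar>b\<bar>" using False epos by (intro mult_mono) auto
    then have "\<epsilon>*\<epsilon> \<le> b*b" by simp
    then have "D*(\<epsilon>*\<epsilon>) \<le> D*(b*b)" using Dpos by simp
    moreover have "D*(\<epsilon>*\<epsilon>) = exp (T powr (1/p))" unfolding D using epos by simp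
    ultimately have "exp (T powr (1/p)) \<le> 1 + D*(b*b)" by linarith
    then have "T powr (1/p) \<le> ln (1 + D*(b*b))" using Dpos
      by (subst ln_ge_iff) (auto intro: add_pos_nonneg)
    then have "T powr (1/p) \<le> Q" unfolding Q_def by simp
    then have "(T powr (1/p)) powr p \<le> Q powr p" using ppos Tpos by (intro powr_mono2) auto
    then have TQ: "T \<le> Q powr p" using ppos Tpos by (simp add: powr_powr)
    then have "M \<le> 1 / T" unfolding Mdef using Tpos by (simp add: frac_le)
    have "\<bar>b\<bar>*\<bar>b\<bar> \<le> B*B" using bB by (intro mult_mono) auto
    then have bb: "b*b \<le> B*B" by simp
    have "(b*b)*M \<le> (B*B)*(1/T)"
      by (rule mult_mono[OF bb \<open>M \<le> 1/T\<close>]) (use M1 in auto)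
    then have "K*((b*b)*M) \<le> K*((B*B)*(1/T))" using Kpos by (intro mult_left_mono) auto
    also have "\<dots> \<le> \<sigma>/4"
    proof -
      have "4*(K*(B*B)) \<le> \<sigma> * T" unfolding T using sig by (simp add: algebra_simps)
      then show ?thesis using Tpos by (simp add: field_simps)
    qed
    finally show ?thesis using T1b by linarith
  qed
  define T2 where "T2 = a*S*b*M'"
  have Ssq: "S = 1 / sqrt NN" unfolding S_def using NNpos
    by (simp add: powr_minus_divide powr_half_sqrt[symmetric])
  have aS: "\<bar>a*S\<bar> \<le> 1"
  proof -
    have "\<bar>a\<bar> \<le> sqrt NN" unfolding NN_def using real_sqrt_ge_abs1[of a b] by (simp add: power2_eq_square)
    then show ?thesis unfolding Ssq using NNpos by (simp add: abs_mult divide_le_eq_1)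
  qed
  have Qp2: "Q powr (-p-1) \<le> 1" "Q powr (-p-1) \<ge> 0"
  proof -
    have "Q powr (p+1) \<ge> 1" using Q1 ppos by (simp add: ge_one_powr_ge_zero)
    moreover have "Q powr (-p-1) = 1 / Q powr (p+1)" by (simp add: powr_minus_divide[symmetric])
    ultimately show "Q powr (-p-1) \<le> 1" "Q powr (-p-1) \<ge> 0" by (auto simp: divide_le_eq_1)
  qed
  have bQ: "\<bar>b*Q'\<bar> \<le> 2*A"
  proof -
    have "D*(b*b) \<ge> 0" using Dpos by simp
    then have dbpos: "1 + D*(b*b) > 0" by linarith
    have "\<bar>b*Q'\<bar> = 2*\<bar>a\<bar> * (D*(b*b) / (1 + D*(b*b)))" unfolding Q'_def using Dpos
      by (simp add: abs_mult field_simps)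
    also have "\<dots> \<le> 2*\<bar>a\<bar> * 1" using Dpos
      using dbpos by (intro mult_left_mono) (auto simp: mult_nonneg_nonneg divide_le_eq_1)
    finally show ?thesis using aA by linarith
  qed
  have T2e: "\<bar>T2\<bar> = \<bar>a*S\<bar> * (p * Q powr (-p-1)) * \<bar>b*Q'\<bar>"
    unfolding T2_def M'_def using ppos Qp2 by (simp add: abs_mult algebra_simps)
  also have "\<dots> \<le> 1 * (p * 1) * (2*A)" using aS Qp2 bQ ppos
    by (intro mult_mono) (auto simp: mult_nonneg_nonneg)
  finally have T2b: "\<bar>T2\<bar> \<le> \<sigma>/2" unfolding p using A by simp
  have "b * (-1/2 * (a'*S*M + a*S'*M + a*S*M')) = -1/2 * (T1 + T2)"
    unfolding T1_def T2_def by (simp add: algebra_simps)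
  then show ?thesis using T1s T2b sig by (simp add: abs_mult)
qed


lemma Cn_minus: "Cn n f \<Longrightarrow> Cn n g \<Longrightarrow> Cn n (\<lambda>x. f x - g x)"
proof -
  assume "Cn n f" "Cn n g"
  then have "Cn n (\<lambda>x. f x + (-1) * g x)" by (intro Cn_add Cn_mult Cn_const)
  then show ?thesis by simp
qed

lemma Cn_cont: "Cn n f \<Longrightarrow> continuous_on S f"
  by (intro continuous_at_imp_continuous_on ballI differentiable_imp_continuous_within Cn_diff)

lemma per_nat: "periodic_2pi f \<Longrightarrow> f (x + 2*pi*real n) = f x"
proof (induction n)
  case 0 then show ?case by simp
next
  case (Suc n)
  have "f (x + 2*pi*real (Suc n)) = f ((x + 2*pi*real n) + 2*pi)" by (simp add: algebra_simps)
  also have "\<dots> = f (x + 2*pi*real n)" using Suc.prems unfolding periodic_2pi_def by blast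
  finally show ?case using Suc by simp
qed

lemma per_int: "periodic_2pi f \<Longrightarrow> f (x + 2*pi* of_int k) = f x"
proof (cases "k \<ge> 0")
  case True
  assume P: "periodic_2pi f"
  obtain n where "k = int n" using True nonneg_eq_int by blast
  then show ?thesis using per_nat[OF P, of x n] by simp
next
  case False
  assume P: "periodic_2pi f"
  define n where "n = nat (-k)"
  have n: "k = - int n" using False unfolding n_def by simp
  have "f ((x - 2*pi*real n) + 2*pi*real n) = f (x - 2*pi*real n)" by (rule per_nat[OF P])
  then show ?thesis using n by simp
qed

lemma per_rep: "periodic_2pi f \<Longrightarrow> \<exists>y\<in>{0..2*pi}. f y = f x"
proof -
  assume P: "periodic_2pi f"
  define t where "t = x / (2*pi)"
  define y where "y = x - 2*pi* of_int \<lfloor>t\<rfloor>"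
  have "f (y + 2*pi* of_int \<lfloor>t\<rfloor>) = f y" by (rule per_int[OF P])
  then have fy: "f y = f x" unfolding y_def by simp
  have "of_int \<lfloor>t\<rfloor> \<le> t" "t < of_int \<lfloor>t\<rfloor> + 1" by linarith+
  then have "2*pi* of_int \<lfloor>t\<rfloor> \<le> 2*pi*t" "2*pi*t \<le> 2*pi*(of_int \<lfloor>t\<rfloor> + 1)"
    using pi_gt_zero by (intro mult_left_mono; simp)+
  moreover have "2*pi*t = x" unfolding t_def by simp
  ultimately have "2*pi* of_int \<lfloor>t\<rfloor> \<le> x" "x \<le> 2*pi* of_int \<lfloor>t\<rfloor> + 2*pi"
    by (auto simp: algebra_simps)
  then have "y \<in> {0..2*pi}" unfolding y_def by auto
  then show ?thesis using fy by blast
qed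

lemma per_bound: "periodic_2pi f \<Longrightarrow> continuous_on {0..2*pi} f \<Longrightarrow> \<exists>B. \<forall>x. \<bar>f x\<bar> \<le> B"
proof -
  assume P: "periodic_2pi f" and c: "continuous_on {0..2*pi} f"
  have "bounded (f ` {0..2*pi})" by (intro compact_imp_bounded compact_continuous_image c) auto
  then obtain B where B: "\<forall>z\<in>f ` {0..2*pi}. \<bar>z\<bar> \<le> B" unfolding bounded_real by blast
  have "\<bar>f x\<bar> \<le> B" for x
  proof -
    obtain y where "y \<in> {0..2*pi}" "f y = f x" using per_rep[OF P, of x] by blast
    then show ?thesis using B by (metis image_eqI)
  qed
  then show ?thesis by blast
qed

lemma per_min: "periodic_2pi f \<Longrightarrow> continuous_on {0..2*pi} f \<Longrightarrow> (\<And>x. f x > 0) \<Longrightarrow> \<exists>m>0. \<forall>x. f x \<ge> m"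
proof -
  assume P: "periodic_2pi f" and c: "continuous_on {0..2*pi} f" and pos: "\<And>x. f x > 0"
  obtain z where z: "z \<in> {0..2*pi}" "\<forall>y\<in>{0..2*pi}. f z \<le> f y"
    using continuous_attains_inf[OF _ _ c] by auto
  have "f x \<ge> f z" for x
  proof -
    obtain y where "y \<in> {0..2*pi}" "f y = f x" using per_rep[OF P, of x] by blast
    then show ?thesis using z by metis
  qed
  then show ?thesis using pos[of z] by blast
qed

lemma per_deriv: "periodic_2pi f \<Longrightarrow> (\<And>x. f differentiable at x) \<Longrightarrow> periodic_2pi (deriv f)"
proof -
  assume P: "periodic_2pi f" and d: "\<And>x. f differentiable at x"
  have eq: "(\<lambda>y. f (y + 2*pi)) = f" using P unfolding periodic_2pi_def by auto
  have "deriv f x = deriv f (x + 2*pi)" for x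
  proof -
    have "((\<lambda>y. f (y + 2*pi)) has_real_derivative deriv f (x + 2*pi) * 1) (at x)"
      by (rule DERIV_chain'[of "\<lambda>y. y + 2*pi" 1 x UNIV f]) (auto intro!: derivative_eq_intros
          simp: DERIV_deriv_iff_real_differentiable d)
    then show ?thesis unfolding eq by (simp add: DERIV_imp_deriv)
  qed
  then show ?thesis unfolding periodic_2pi_def by simp
qed



lemma sgn_powr: "(a::real) \<noteq> 0 \<Longrightarrow> a * (a*a) powr (-1/2) = sgn a"
proof -
  assume a: "a \<noteq> 0"
  have "(a*a) powr (-1/2) = 1 / (a*a) powr (1/2)" by (simp add: powr_minus_divide[symmetric])
  also have "\<dots> = 1 / sqrt (a*a)" by (simp add: powr_half_sqrt)
  also have "\<dots> = 1 / \<bar>a\<bar>" by simp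
  finally show ?thesis using a by (simp add: sgn_real_def)
qed

lemma my_powr: "0 < g x \<Longrightarrow> (g has_real_derivative D) (at x) \<Longrightarrow>
  ((\<lambda>x. g x powr r) has_real_derivative r * g x powr (r - 1) * D) (at x)"
  by (rule derivative_intros(71))

lemma my_ln: "0 < g x \<Longrightarrow> (g has_real_derivative D) (at x) \<Longrightarrow>
  ((\<lambda>x. ln (g x)) has_real_derivative D / g x) (at x)"
  using derivative_intros(63)[of g x D UNIV] by simp

theorem mainTheorem15:
  fixes X :: "real \<Rightarrow> real"
  assumes "smooth_real X" and "periodic_2pi X"
    and "\<exists>x. X x = 0"
    and "\<forall>x. X x = 0 \<longrightarrow> deriv X x \<noteq> 0"
  shows "\<exists>\<sigma>0>0. \<forall>\<sigma>. 0 < \<sigma> \<and> \<sigma> < \<sigma>0 \<longrightarrow>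
    (\<exists>\<eta> :: real \<Rightarrow> real. smooth_real \<eta> \<and> periodic_2pi \<eta> \<and>
       (\<forall>x\<in>Kplus X. \<eta> x = 1) \<and> (\<forall>x\<in>Kminus X. \<eta> x = 0) \<and>
       (\<forall>x. \<bar>X x * deriv \<eta> x\<bar> < \<sigma>) \<and>
       (\<forall>x \<gamma>. \<gamma> 0 = x \<and> (\<forall>t. (\<gamma> has_real_derivative X (\<gamma> t)) (at t)) \<longrightarrow>
          ((\<eta> \<circ> \<gamma>) has_real_derivative X x * deriv \<eta> x) (at 0)))"
proof -
  have sm: "\<forall>n. Cn n X" using assms(1) smooth_Cn by blast
  define X1 where "X1 = deriv X"
  define X2 where "X2 = deriv X1"
  have cX: "Cn n X" for n using sm by blast
  have cX1: "Cn n X1" for n using cX[of "Suc n"] unfolding X1_def by simp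
  have cX2: "Cn n X2" for n using cX1[of "Suc n"] unfolding X2_def by simp
  have dX: "(X has_real_derivative X1 x) (at x)" for x unfolding X1_def by (rule Cn_hasd[OF cX])
  have dX1: "(X1 has_real_derivative X2 x) (at x)" for x unfolding X2_def by (rule Cn_hasd[OF cX1])
  have pX: "periodic_2pi X" by (rule assms(2))
  have pX1: "periodic_2pi X1" unfolding X1_def by (rule per_deriv[OF pX Cn_diff[OF cX]])
  have pX2: "periodic_2pi X2" unfolding X2_def by (rule per_deriv[OF pX1 Cn_diff[OF cX1]])
  define NN where "NN = (\<lambda>x. X1 x * X1 x + X x * X x)"
  have NNpos: "NN x > 0" for x
  proof (cases "X x = 0")
    case True
    then have "X1 x \<noteq> 0" using assms(4) X1_def by auto
    then have "X1 x * X1 x > 0" by (auto simp: zero_less_mult_iff)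
    then show ?thesis unfolding NN_def using True by simp
  next
    case False
    then have "X x * X x > 0" by (auto simp: zero_less_mult_iff)
    then show ?thesis unfolding NN_def by (simp add: add_nonneg_pos)
  qed
  have cNN: "Cn n NN" for n unfolding NN_def by (intro Cn_add Cn_mult cX cX1)
  have pNN: "periodic_2pi NN" using pX pX1 unfolding periodic_2pi_def NN_def by simp
  obtain m where m: "m > 0" "\<forall>x. NN x \<ge> m" using per_min[OF pNN Cn_cont[OF cNN] NNpos] by blast
  obtain A0 where A0: "\<forall>x. \<bar>X1 x\<bar> \<le> A0" using per_bound[OF pX1 Cn_cont[OF cX1]] by blast
  define A where "A = A0 + 1"
  have Apos: "A > 0" using A0[rule_format, of 0] abs_ge_zero[of "X1 0"] unfolding A_def by linarith
  have A: "\<bar>X1 x\<bar> \<le> A" for x using A0[rule_format, of x] unfolding A_def by linarith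
  define G where "G = (\<lambda>x. X2 x * X x - X1 x * X1 x)"
  have pG: "periodic_2pi G" using pX pX1 pX2 unfolding periodic_2pi_def G_def by simp
  have cG: "Cn 0 G" unfolding G_def by (intro Cn_minus Cn_mult cX cX1 cX2)
  obtain C where C: "\<forall>x. \<bar>G x\<bar> \<le> C" using per_bound[OF pG Cn_cont[OF cG]] by blast
  obtain B where B: "\<forall>x. \<bar>X x\<bar> \<le> B" using per_bound[OF pX Cn_cont[OF cX]] by blast
  show ?thesis
  proof (intro exI[of _ 1] conjI allI impI)
    show "0 < (1::real)" by simp
  next
    fix \<sigma> :: real assume sg: "0 < \<sigma> \<and> \<sigma> < 1"
    define K where "K = C * m powr (-3/2) + 1"
    define p where "p = \<sigma> / (4*A)"
    define \<epsilon> where "\<epsilon> = sqrt (\<sigma> / (4*K))"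
    define T where "T = 4*K*(B*B)/\<sigma> + 1"
    define D where "D = exp (T powr (1/p)) / (\<epsilon>*\<epsilon>)"
    have C0: "C \<ge> 0" using C[rule_format, of 0] abs_ge_zero[of "G 0"] by linarith
    have Kpos: "K > 0" unfolding K_def using C0 by (simp add: add_nonneg_pos)
    have ppos: "p > 0" unfolding p_def using sg Apos by simp
    have Dpos: "D > 0" unfolding D_def \<epsilon>_def using sg Kpos by simp
    define \<eta> where "\<eta> = (\<lambda>x. 1/2 - 1/2 * (X1 x * (X1 x * X1 x + X x * X x) powr (-1/2)
                         * (1 + ln (1 + D * (X x * X x))) powr (-p)))"
    define E where "E = (\<lambda>x. -1/2 * (X2 x * ((X1 x * X1 x + X x * X x) powr (-1/2)) * ((1 + ln (1 + D * (X x * X x))) powr (-p))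
       + X1 x * ((-1/2) * (X1 x * X1 x + X x * X x) powr (-1/2 - 1) * (X1 x * X2 x + X2 x * X1 x + (X x * X1 x + X1 x * X x))) * ((1 + ln (1 + D * (X x * X x))) powr (-p))
       + X1 x * ((X1 x * X1 x + X x * X x) powr (-1/2)) * ((-p) * (1 + ln (1 + D * (X x * X x))) powr (-p - 1) * (D * (X1 x * X x + X x * X1 x) / (1 + D * (X x * X x))))))"
    have Dge: "1 + D * (X x * X x) \<ge> 1" for x using Dpos by simp
    have Qge: "1 + ln (1 + D * (X x * X x)) \<ge> 1" for x using Dge[of x] by simp
    have NNp: "X1 x * X1 x + X x * X x > 0" for x using NNpos[of x] unfolding NN_def .
    have dEta: "(\<eta> has_real_derivative E x) (at x)" for x
    proof -
      let ?N = "\<lambda>x. X1 x * X1 x + X x * X x"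
      let ?N' = "X1 x * X2 x + X2 x * X1 x + (X x * X1 x + X1 x * X x)"
      have dN: "(?N has_real_derivative ?N') (at x)"
        by (rule derivative_eq_intros dX dX1 refl)+ (simp add: algebra_simps)
      have dS: "((\<lambda>x. ?N x powr (-1/2)) has_real_derivative (-1/2) * ?N x powr (-1/2 - 1) * ?N') (at x)"
        by (rule my_powr[OF NNp dN])
      let ?L = "\<lambda>x. 1 + D * (X x * X x)"
      have dL: "(?L has_real_derivative D * (X1 x * X x + X x * X1 x)) (at x)"
        by (rule derivative_eq_intros dX dX1 refl)+ (simp add: algebra_simps)
      have Lpos: "?L x > 0" using Dge[of x] by linarith
      let ?Q = "\<lambda>x. 1 + ln (1 + D * (X x * X x))"
      have dQ: "(?Q has_real_derivative D * (X1 x * X x + X x * X1 x) / (1 + D * (X x * X x))) (at x)"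
        using DERIV_add[OF DERIV_const[of 1] my_ln[OF Lpos dL]] by simp
      have Qpos: "?Q x > 0" using Qge[of x] by linarith
      have dM: "((\<lambda>x. ?Q x powr (-p)) has_real_derivative (-p) * ?Q x powr (-p - 1) * (D * (X1 x * X x + X x * X1 x) / (1 + D * (X x * X x)))) (at x)"
        by (rule my_powr[OF Qpos dQ])
      have "((\<lambda>x. X1 x * ?N x powr (-1/2) * ?Q x powr (-p)) has_real_derivative
           (X2 x * ?N x powr (-1/2) + (-1/2) * ?N x powr (-1/2 - 1) * ?N' * X1 x) * ?Q x powr (-p)
           + (-p) * ?Q x powr (-p - 1) * (D * (X1 x * X x + X x * X1 x) / (1 + D * (X x * X x))) * (X1 x * ?N x powr (-1/2))) (at x)"
        by (rule DERIV_mult[OF DERIV_mult[OF dX1 dS] dM])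
      from DERIV_diff[OF DERIV_const[of "1/2"] DERIV_cmult[OF this, of "1/2"]]
      have H: "(\<eta> has_real_derivative 0 - 1/2 * ((X2 x * ?N x powr (-1/2) + (-1/2) * ?N x powr (-1/2 - 1) * ?N' * X1 x) * ?Q x powr (-p)
           + (-p) * ?Q x powr (-p - 1) * (D * (X1 x * X x + X x * X1 x) / (1 + D * (X x * X x))) * (X1 x * ?N x powr (-1/2)))) (at x)"
        unfolding \<eta>_def by (simp only: mult.assoc)
      have "0 - 1/2 * ((X2 x * ?N x powr (-1/2) + (-1/2) * ?N x powr (-1/2 - 1) * ?N' * X1 x) * ?Q x powr (-p)
           + (-p) * ?Q x powr (-p - 1) * (D * (X1 x * X x + X x * X1 x) / (1 + D * (X x * X x))) * (X1 x * ?N x powr (-1/2))) = E x"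
        unfolding E_def by algebra
      with H show ?thesis by simp
    qed
    have derivE: "deriv \<eta> x = E x" for x using DERIV_imp_deriv[OF dEta] .
    have c1: "Cn n (\<lambda>x. (X1 x * X1 x + X x * X x) powr (-1/2))" for n
      by (rule Cn_powr[OF _ NNp]) (intro Cn_add Cn_mult cX cX1)
    have c2: "Cn n (\<lambda>x. ln (1 + D * (X x * X x)))" for n
    proof (rule Cn_ln)
      show "Cn n (\<lambda>x. 1 + D * (X x * X x))" by (intro Cn_add Cn_mult Cn_const cX)
      show "0 < 1 + D * (X x * X x)" for x using Dge[of x] by linarith
    qed
    have c3: "Cn n (\<lambda>x. (1 + ln (1 + D * (X x * X x))) powr (-p))" for n
    proof (rule Cn_powr)
      show "Cn n (\<lambda>x. 1 + ln (1 + D * (X x * X x)))" by (intro Cn_add Cn_const c2)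
      show "0 < 1 + ln (1 + D * (X x * X x))" for x using Qge[of x] by linarith
    qed
    have cEta: "Cn n \<eta>" for n
      unfolding \<eta>_def by (intro Cn_minus Cn_const Cn_mult cX1 c1 c3)
    show "\<exists>\<eta> :: real \<Rightarrow> real. smooth_real \<eta> \<and> periodic_2pi \<eta> \<and>
       (\<forall>x\<in>Kplus X. \<eta> x = 1) \<and> (\<forall>x\<in>Kminus X. \<eta> x = 0) \<and>
       (\<forall>x. \<bar>X x * deriv \<eta> x\<bar> < \<sigma>) \<and>
       (\<forall>x \<gamma>. \<gamma> 0 = x \<and> (\<forall>t. (\<gamma> has_real_derivative X (\<gamma> t)) (at t)) \<longrightarrow>
          ((\<eta> \<circ> \<gamma>) has_real_derivative X x * deriv \<eta> x) (at 0))"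
    proof (intro exI[of _ \<eta>] conjI ballI allI impI)
      show "smooth_real \<eta>" unfolding smooth_Cn using cEta by blast
      show "periodic_2pi \<eta>" using pX pX1 unfolding periodic_2pi_def \<eta>_def by simp
    next
      fix x assume "x \<in> Kplus X"
      then have x: "X x = 0" "X1 x < 0" unfolding Kplus_def X1_def by auto
      have "X1 x * (X1 x * X1 x) powr (-1/2) = -1" using sgn_powr[of "X1 x"] x by simp
      then show "\<eta> x = 1" unfolding \<eta>_def using x by simp
    next
      fix x assume "x \<in> Kminus X"
      then have x: "X x = 0" "X1 x > 0" unfolding Kminus_def X1_def by auto
      have "X1 x * (X1 x * X1 x) powr (-1/2) = 1" using sgn_powr[of "X1 x"] x by simp
      then show "\<eta> x = 0" unfolding \<eta>_def using x by simp
    next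
      fix x
      have Nx: "X1 x * X1 x + X x * X x \<ge> m" using m(2) unfolding NN_def by simp
      have Gx: "\<bar>X2 x * X x - X1 x * X1 x\<bar> \<le> C" using C unfolding G_def by simp
      have sg0: "\<sigma> > 0" using sg by simp
      note kb = key_bound[OF m(1) Nx A[of x] Apos Gx B[rule_format, of x] sg0 K_def p_def \<epsilon>_def T_def D_def]
      show "\<bar>X x * deriv \<eta> x\<bar> < \<sigma>" unfolding derivE E_def using kb by simp
    next
      fix x :: real and \<gamma> :: "real \<Rightarrow> real"
      assume H: "\<gamma> 0 = x \<and> (\<forall>t. (\<gamma> has_real_derivative X (\<gamma> t)) (at t))"
      have "((\<eta> \<circ> \<gamma>) has_real_derivative deriv \<eta> (\<gamma> 0) * X (\<gamma> 0)) (at 0)"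
        by (rule DERIV_chain[OF Cn_hasd[OF cEta[of 0]]]) (use H in blast)
      then show "((\<eta> \<circ> \<gamma>) has_real_derivative X x * deriv \<eta> x) (at 0)"
        using H by (simp add: mult.commute)
    qed
  qed
qed

end
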